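(* Let $n\ge2$ and let $\mathcal{M}\subseteq\mathbb{R}^{n\times n}$ be path-connected. Suppose that for each $M\in\mathcal{M}$ both $M$ and $M^{[2]}$ are nonsingular, and that $\mathcal{M}$ contains a positive stable (resp. Hurwitz) matrix. Then every matrix in $\mathcal{M}$ is positive stable (resp. Hurwitz).
   Context: A real square matrix is positive stable if all its eigenvalues have positive real part, and Hurwitz if all its eigenvalues have negative real part. $\mathbb{R}^{n\times n}$ carries the Euclidean topology. For $M\in\mathbb{R}^{n\times n}$, $M^{[2]}$ is the second additive compound: the matrix of $u\wedge v\mapsto Mu\wedge v+u\wedge Mv$ on $\Lambda^2\mathbb{R}^n$ with respect to the basis $e_i\wedge e_j$ ($i<j$). *)

theory Defs
  imports "HOL-Analysis.Analysis"
begin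

definition cmat :: "real^'n^'n \<Rightarrow> complex^'n^'n" where
  "cmat M = (\<chi> i j. complex_of_real (M $ i $ j))"

definition is_eigenvalue :: "real^'n^'n \<Rightarrow> complex \<Rightarrow> bool" where
  "is_eigenvalue M l \<longleftrightarrow> (\<exists>v::complex^'n. v \<noteq> 0 \<and> cmat M *v v = l *s v)"

definition positive_stable :: "real^'n^'n \<Rightarrow> bool" where
  "positive_stable M \<longleftrightarrow> (\<forall>l. is_eigenvalue M l \<longrightarrow> Re l > 0)"

definition hurwitz :: "real^'n^'n \<Rightarrow> bool" where
  "hurwitz M \<longleftrightarrow> (\<forall>l. is_eigenvalue M l \<longrightarrow> Re l < 0)"

text \<open>Index set of the basis e_i \<and> e_j (i < j) of the second exterior power.\<close>
definition wedge_idx :: "('n::linorder \<times> 'n) set" where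
  "wedge_idx = {(i, j). i < j}"

text \<open>Coordinate of e_a \<and> e_b with respect to the basis vector e_i \<and> e_j (i < j).\<close>
definition wedge_coord :: "'n \<Rightarrow> 'n \<Rightarrow> ('n \<times> 'n) \<Rightarrow> real" where
  "wedge_coord a b p = (if (a, b) = p then 1 else if (b, a) = p then -1 else 0)"

text \<open>Second additive compound: entry at row (i,j), column (k,l) is the (i,j)-coordinate
  of M e_k \<and> e_l + e_k \<and> M e_l.\<close>
definition compound2 :: "real^('n::{finite,linorder})^('n::{finite,linorder}) \<Rightarrow> ('n \<times> 'n) \<Rightarrow> ('n \<times> 'n) \<Rightarrow> real" where
  "compound2 M p q =
     (\<Sum>r\<in>UNIV. M $ r $ fst q * wedge_coord r (snd q) p)
   + (\<Sum>r\<in>UNIV. M $ r $ snd q * wedge_coord (fst q) r p)"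

definition compound2_nonsingular :: "real^('n::{finite,linorder})^('n::{finite,linorder}) \<Rightarrow> bool" where
  "compound2_nonsingular M \<longleftrightarrow>
     (\<forall>x :: 'n \<times> 'n \<Rightarrow> real.
        (\<forall>p\<in>wedge_idx. (\<Sum>q\<in>wedge_idx. compound2 M p q * x q) = 0)
        \<longrightarrow> (\<forall>q\<in>wedge_idx. x q = 0))"

end

theory Submission
  imports Defs "HOL-Computational_Algebra.Fundamental_Theorem_Algebra"
begin

lemma wc_alt:
  assumes "i \<noteq> j"
  shows "wedge_coord a b (i,j) = (if a = i \<and> b = j then 1 else 0) - (if a = j \<and> b = i then 1 else 0)"
  using assms unfolding wedge_coord_def by auto

lemma sum_delta_and:
  fixes g :: "'n::finite \<Rightarrow> real"
  shows "(\<Sum>r\<in>UNIV. g r * (if r = i \<and> P then 1 else 0)) = (if P then g i else 0)"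
  by (cases P) (simp_all add: if_distrib sum.delta cong: if_cong)

lemma sum_delta_and2:
  fixes g :: "'n::finite \<Rightarrow> real"
  shows "(\<Sum>r\<in>UNIV. g r * (if P \<and> r = i then 1 else 0)) = (if P then g i else 0)"
  by (cases P) (simp_all add: if_distrib sum.delta cong: if_cong)

lemma compound2_closed:
  fixes M :: "real^('n::{finite,linorder})^('n::{finite,linorder})"
  assumes "i \<noteq> j"
  shows "compound2 M (i,j) (k,l) =
     (if l = j then M$i$k else 0) - (if l = i then M$j$k else 0)
   + (if k = i then M$j$l else 0) - (if k = j then M$i$l else 0)"
proof -
  have "compound2 M (i,j) (k,l) =
     (\<Sum>r\<in>UNIV. M $ r $ k * (if r = i \<and> l = j then 1 else 0)) - (\<Sum>r\<in>UNIV. M $ r $ k * (if r = j \<and> l = i then 1 else 0))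
   + ((\<Sum>r\<in>UNIV. M $ r $ l * (if k = i \<and> r = j then 1 else 0)) - (\<Sum>r\<in>UNIV. M $ r $ l * (if k = j \<and> r = i then 1 else 0)))"
    unfolding compound2_def wc_alt[OF assms] right_diff_distrib sum_subtractf by simp
  then show ?thesis by (simp only: sum_delta_and sum_delta_and2)
qed


lemma sum_pairs:
  fixes g :: "('n::finite \<times> 'n) \<Rightarrow> real"
  shows "(\<Sum>q\<in>UNIV. g q) = (\<Sum>k\<in>UNIV. \<Sum>l\<in>UNIV. g (k,l))"
  by (simp add: sum.cartesian_product UNIV_Times_UNIV[symmetric] del: UNIV_Times_UNIV)

lemma sum_sym_half:
  fixes f :: "('n::{finite,linorder} \<times> 'n) \<Rightarrow> real"
  assumes sym: "\<And>k l. f (l,k) = f (k,l)" and diag: "\<And>k. f (k,k) = 0"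
  shows "(\<Sum>q\<in>UNIV. f q) = 2 * (\<Sum>q\<in>wedge_idx. f q)"
proof -
  have W: "wedge_idx = {q\<in>UNIV. fst q < snd q}" unfolding wedge_idx_def by auto
  have 1: "(\<Sum>q\<in>wedge_idx. f q) = (\<Sum>q\<in>UNIV. if fst q < snd q then f q else 0)"
    unfolding W by (rule sum.inter_filter) simp
  have pt: "f q = (if fst q < snd q then f q else 0) + (if snd q < fst q then f q else 0)" for q
  proof (cases q)
    case (Pair k l)
    then show ?thesis using diag[of k] by (cases k l rule: linorder_cases) auto
  qed
  have "(\<Sum>q\<in>UNIV. f q) = (\<Sum>q\<in>UNIV. if fst q < snd q then f q else 0) + (\<Sum>q\<in>UNIV. if snd q < fst q then f q else 0)"
    by (subst pt) (simp add: sum.distrib)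
  also have "(\<Sum>q\<in>UNIV. if snd q < fst q then f q else 0) = (\<Sum>q\<in>UNIV. if fst q < snd q then f q else 0)"
  proof -
    have "(\<Sum>q\<in>UNIV. if snd q < fst q then f q else 0) = (\<Sum>k\<in>UNIV. \<Sum>l\<in>UNIV. if l < k then f (k,l) else 0)"
      by (simp add: sum_pairs)
    also have "\<dots> = (\<Sum>l\<in>UNIV. \<Sum>k\<in>UNIV. if l < k then f (l,k) else 0)"
    proof -
      have "\<And>k l. (if l < k then f (k,l) else 0) = (if l < k then f (l,k) else 0)" using sym by metis
      then show ?thesis by (subst sum.swap) (simp only:)
    qed
    also have "\<dots> = (\<Sum>q\<in>UNIV. if fst q < snd q then f q else 0)"
      by (simp add: sum_pairs)
    finally show ?thesis .
  qed
  finally show ?thesis using 1 by simp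
qed

lemma compound2_kernel:
  fixes M :: "real^('n::{finite,linorder})^('n::{finite,linorder})"
    and a b :: "real^('n::{finite,linorder})"
  assumes Ma: "\<And>i. (\<Sum>k\<in>UNIV. M$i$k * a$k) = - w * b$i"
    and Mb: "\<And>i. (\<Sum>k\<in>UNIV. M$i$k * b$k) = w * a$i"
    and p: "p \<in> wedge_idx"
  shows "(\<Sum>q\<in>wedge_idx. compound2 M p q * (a$(fst q) * b$(snd q) - a$(snd q) * b$(fst q))) = 0"
proof -
  obtain i j where pij: "p = (i,j)" and ij: "i < j" using p unfolding wedge_idx_def by auto
  then have ij': "i \<noteq> j" by simp
  define x where "x k l = a$k * b$l - a$l * b$k" for k l
  define f where "f q = compound2 M p q * x (fst q) (snd q)" for q
  have cl: "compound2 M p (k,l) =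
     (if l = j then M$i$k else 0) - (if l = i then M$j$k else 0)
   + (if k = i then M$j$l else 0) - (if k = j then M$i$l else 0)" for k l
    unfolding pij by (rule compound2_closed[OF ij'])
  have sym: "f (l,k) = f (k,l)" for k l
    unfolding f_def x_def cl by simp (simp add: algebra_simps)
  have diag: "f (k,k) = 0" for k unfolding f_def x_def by simp
  have full: "(\<Sum>q\<in>UNIV. f q) = 0"
  proof -
    have "(\<Sum>q\<in>UNIV. f q) = (\<Sum>k\<in>UNIV. \<Sum>l\<in>UNIV. f (k,l))" by (rule sum_pairs)
    also have "\<dots> = (\<Sum>k\<in>UNIV. M$i$k * x k j) - (\<Sum>k\<in>UNIV. M$j$k * x k i)
        + (\<Sum>l\<in>UNIV. M$j$l * x i l) - (\<Sum>l\<in>UNIV. M$i$l * x j l)"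
    proof -
      have ifz: "\<And>P c y. (if P then c else 0) * y = (if P then c * y else (0::real))" by simp
      have sif: "\<And>P g. (\<Sum>l\<in>UNIV. if P then g l else 0) = (if P then (\<Sum>l\<in>UNIV. g l) else (0::real))" by simp
      have fe: "f (k,l) = (if l = j then M$i$k * x k l else 0) - (if l = i then M$j$k * x k l else 0)
         + (if k = i then M$j$l * x k l else 0) - (if k = j then M$i$l * x k l else 0)" for k l
        unfolding f_def cl by (simp add: algebra_simps)
      show ?thesis unfolding fe sum_subtractf sum.distrib
        by (simp only: sif sum.delta sum.delta' finite UNIV_I if_True)
    qed
    also have "\<dots> = 0"
    proof -
      have e1: "(\<Sum>k\<in>UNIV. M$r$k * x k s) = b$s * (\<Sum>k\<in>UNIV. M$r$k * a$k) - a$s * (\<Sum>k\<in>UNIV. M$r$k * b$k)" for r s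
        unfolding x_def by (simp add: algebra_simps sum_subtractf sum_distrib_left)
      have e2: "(\<Sum>k\<in>UNIV. M$r$k * x s k) = a$s * (\<Sum>k\<in>UNIV. M$r$k * b$k) - b$s * (\<Sum>k\<in>UNIV. M$r$k * a$k)" for r s
        unfolding x_def by (simp add: algebra_simps sum_subtractf sum_distrib_left)
      show ?thesis unfolding e1 e2 Ma Mb by (simp add: algebra_simps)
    qed
    finally show ?thesis .
  qed
  have "(\<Sum>q\<in>UNIV. f q) = 2 * (\<Sum>q\<in>wedge_idx. f q)"
    using sum_sym_half[of f] sym diag by blast
  then have "(\<Sum>q\<in>wedge_idx. f q) = 0" using full by simp
  then show ?thesis unfolding f_def x_def .
qed


lemma invertible_ker:
  fixes M :: "real^('n::finite)^('n::finite)"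
  assumes "invertible M" "M *v x = 0" shows "x = 0"
  using assms invertible_left_inverse matrix_left_invertible_ker by metis

lemma no_imag_eig:
  fixes M :: "real^('n::{finite,linorder})^('n::{finite,linorder})"
  assumes inv: "invertible M" and ns: "compound2_nonsingular M" and ev: "is_eigenvalue M z"
  shows "Re z \<noteq> 0"
proof
  assume Rz: "Re z = 0"
  obtain v where v0: "v \<noteq> 0" and vv: "cmat M *v v = z *s v"
    using ev unfolding is_eigenvalue_def by blast
  define w where "w = Im z"
  define a where "a = (\<chi> i. Re (v$i))"
  define b where "b = (\<chi> i. Im (v$i))"
  have comp: "(\<Sum>k\<in>UNIV. complex_of_real (M$i$k) * v$k) = z * v$i" for i
    using vv unfolding vec_eq_iff matrix_vector_mult_def cmat_def by simp
  have Ma: "(\<Sum>k\<in>UNIV. M$i$k * a$k) = - w * b$i" for i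
  proof -
    have "Re (\<Sum>k\<in>UNIV. complex_of_real (M$i$k) * v$k) = Re (z * v$i)" using comp by simp
    then show ?thesis using Rz unfolding a_def b_def w_def by (simp add: Re_sum)
  qed
  have Mb: "(\<Sum>k\<in>UNIV. M$i$k * b$k) = w * a$i" for i
  proof -
    have "Im (\<Sum>k\<in>UNIV. complex_of_real (M$i$k) * v$k) = Im (z * v$i)" using comp by simp
    then show ?thesis using Rz unfolding a_def b_def w_def by (simp add: Im_sum)
  qed
  have vab: "v = 0" if "a = 0" "b = 0"
    using that unfolding a_def b_def vec_eq_iff complex_eq_iff by simp
  have b0: "b = 0" if "a = 0"
  proof -
    have "M *v b = 0" using Mb that unfolding matrix_vector_mult_def vec_eq_iff by simp
    then show ?thesis using invertible_ker[OF inv] by blast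
  qed
  show False
  proof (cases "w = 0")
    case True
    have "M *v a = 0" using Ma True unfolding matrix_vector_mult_def vec_eq_iff by simp
    then have "a = 0" using invertible_ker[OF inv] by blast
    then show False using b0 vab v0 by blast
  next
    case False
    define x where "x q = a$(fst q) * b$(snd q) - a$(snd q) * b$(fst q)" for q
    have "\<forall>p\<in>wedge_idx. (\<Sum>q\<in>wedge_idx. compound2 M p q * x q) = 0"
      unfolding x_def using compound2_kernel[OF Ma Mb] by blast
    then have xz: "\<forall>q\<in>wedge_idx. x q = 0" using ns unfolding compound2_nonsingular_def by blast
    have par: "a$k * b$l = a$l * b$k" for k l
    proof (cases k l rule: linorder_cases)
      case less then show ?thesis using xz[rule_format, of "(k,l)"] unfolding x_def wedge_idx_def by simp
    next
      case greater then show ?thesis using xz[rule_format, of "(l,k)"] unfolding x_def wedge_idx_def by simp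
    qed simp
    show False
    proof (cases "a = 0")
      case True then show False using b0 vab v0 by blast
    next
      case an: False
      then obtain m where am: "a$m \<noteq> 0" unfolding vec_eq_iff by auto
      define c where "c = b$m / a$m"
      have bl: "b$l = c * a$l" for l
        using par[of m l] am unfolding c_def by (simp add: field_simps)
      have "w * a$m = (\<Sum>k\<in>UNIV. M$m$k * b$k)" using Mb by simp
      also have "\<dots> = c * (\<Sum>k\<in>UNIV. M$m$k * a$k)" by (simp add: bl sum_distrib_left algebra_simps)
      also have "\<dots> = c * (- w * (c * a$m))" using Ma bl by simp
      finally have "w * a$m * (1 + c^2) = 0" by (simp add: algebra_simps power2_eq_square)
      moreover have "1 + c^2 \<noteq> 0" by (smt (verit) zero_le_power2)
      ultimately show False using am False by simp
    qed
  qed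
qed


definition chm :: "complex^('n::finite)^('n::finite) \<Rightarrow> complex \<Rightarrow> complex^'n^'n" where
  "chm A z = (\<chi> i j. (if i = j then z else 0) - A$i$j)"

definition cpoly :: "complex^('n::finite)^('n::finite) \<Rightarrow> complex poly" where
  "cpoly A = det (\<chi> i j. (if i = j then [:0,1:] else 0) - [:A$i$j:])"

lemma ifm: "(if P then (z::'a::comm_ring_1) else 0) * c = (if P then z * c else 0)" by simp

lemma poly_if: "poly (if P then p else q) z = (if P then poly p z else poly q z)" by simp

lemma chm_mult: "chm A z *v v = z *s v - A *v v"
  unfolding chm_def vec_eq_iff matrix_vector_mult_def
  by (simp add: left_diff_distrib sum_subtractf ifm)

lemma eig_det: "is_eigenvalue N z \<longleftrightarrow> det (chm (cmat N) z) = 0"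
proof -
  have "det (chm (cmat N) z) = 0 \<longleftrightarrow> \<not> (\<forall>x. chm (cmat N) z *v x = 0 \<longrightarrow> x = 0)"
    using invertible_det_nz invertible_left_inverse matrix_left_invertible_ker by metis
  also have "\<dots> \<longleftrightarrow> is_eigenvalue N z"
    unfolding is_eigenvalue_def chm_mult by (auto simp: eq_iff_diff_eq_0[symmetric]) metis
  finally show ?thesis by simp
qed

lemma poly_cpoly: "poly (cpoly A) z = det (chm A z)"
  unfolding cpoly_def det_def chm_def
  by (simp add: poly_sum poly_prod poly_if cong: if_cong)


lemma sum_indic_card: "(\<Sum>i\<in>(UNIV::'n::finite set). (if P i then 1 else 0::nat)) = card {i. P i}"
  by (simp add: sum.If_cases)

lemma cpoly_deg:
  fixes A :: "complex^('n::finite)^('n::finite)"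
  shows "degree (cpoly A) = CARD('n) \<and> lead_coeff (cpoly A) = 1"
proof -
  define e where "e i j = (if i = j then [:0,1:] else 0) - [:A$i$j:]" for i j
  define t where "t p = (of_int (sign p) :: complex poly) * (\<Prod>i\<in>UNIV. e i (p i))" for p
  have cp: "cpoly A = (\<Sum>p\<in>{p. p permutes (UNIV::'n set)}. t p)"
    unfolding cpoly_def det_def t_def e_def by simp
  have de: "degree (e i j) \<le> (if i = j then 1 else 0)" for i j
    unfolding e_def by (cases "i = j") auto
  have dt: "degree (t p) \<le> card {i. i = p i}" for p
  proof -
    have "degree (t p) \<le> degree (of_int (sign p) :: complex poly) + degree (\<Prod>i\<in>UNIV. e i (p i))"
      unfolding t_def by (rule degree_mult_le)
    also have "\<dots> = degree (\<Prod>i\<in>UNIV. e i (p i))" by simp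
    also have "\<dots> \<le> (\<Sum>i\<in>UNIV. degree (e i (p i)))"
      using degree_prod_sum_le[of UNIV "\<lambda>i. e i (p i)"] by (simp add: o_def)
    also have "\<dots> \<le> (\<Sum>i\<in>UNIV. (if i = p i then 1 else 0))"
      by (rule sum_mono) (rule de)
    also have "\<dots> = card {i. i = p i}" by (rule sum_indic_card)
    finally show ?thesis .
  qed
  have dt_le: "degree (t p) \<le> CARD('n)" for p
    using dt[of p] card_mono[of UNIV "{i. i = p i}"] by simp
  have dt_lt: "degree (t p) < CARD('n)" if "p \<noteq> id" for p
  proof -
    from that obtain i where "p i \<noteq> i" by (auto simp: fun_eq_iff)
    then have "{i. i = p i} \<subset> UNIV" by (metis (mono_tags) UNIV_I mem_Collect_eq psubsetI subset_UNIV)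
    then have "card {i. i = p i} < CARD('n)" by (rule psubset_card_mono[OF finite])
    then show ?thesis using dt[of p] by simp
  qed
  have tid: "t id = (\<Prod>i\<in>UNIV. [:- A$i$i, 1:])"
    unfolding t_def e_def by (simp add: sign_id)
  have ctid: "coeff (t id) CARD('n) = 1"
  proof -
    have "degree (t id) = CARD('n)" unfolding tid
      by (subst degree_prod_eq_sum_degree) auto
    moreover have "lead_coeff (t id) = 1" unfolding tid lead_coeff_prod by simp
    ultimately show ?thesis by simp
  qed
  have "coeff (cpoly A) CARD('n) = (\<Sum>p\<in>{p. p permutes (UNIV::'n set)}. coeff (t p) CARD('n))"
    unfolding cp coeff_sum ..
  also have "\<dots> = coeff (t id) CARD('n) + (\<Sum>p\<in>{p. p permutes (UNIV::'n set)} - {id}. coeff (t p) CARD('n))"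
    by (rule sum.remove) (auto simp: permutes_id finite_permutations)
  also have "(\<Sum>p\<in>{p. p permutes (UNIV::'n set)} - {id}. coeff (t p) CARD('n)) = 0"
    by (rule sum.neutral) (auto intro!: coeff_eq_0 dt_lt)
  finally have c1: "coeff (cpoly A) CARD('n) = 1" using ctid by (simp add: id_def)
  have "degree (cpoly A) \<le> CARD('n)" unfolding cp
    by (rule degree_sum_le) (auto simp: finite_permutations dt_le)
  moreover have "CARD('n) \<le> degree (cpoly A)" using c1 by (intro le_degree) simp
  ultimately have "degree (cpoly A) = CARD('n)" by simp
  then show ?thesis using c1 by simp
qed


lemma cpoly_lower:
  fixes A :: "complex^('n::finite)^('n::finite)"
  assumes roots: "\<And>z. poly (cpoly A) z = 0 \<Longrightarrow> e \<le> dist z l" and e0: "0 \<le> e"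
  shows "e ^ CARD('n) \<le> cmod (poly (cpoly A) l)"
proof -
  obtain root where r: "smult (lead_coeff (cpoly A)) (\<Prod>i<degree (cpoly A). [:-root i, 1:]) = cpoly A"
    by (rule complex_poly_decompose')
  have d1: "degree (cpoly A) = CARD('n)" and d2: "coeff (cpoly A) CARD('n) = 1" using cpoly_deg[of A] by auto
  have "smult 1 (\<Prod>i<CARD('n). [:-root i, 1:]) = cpoly A" using r by (simp only: d1 d2)
  then have pe: "cpoly A = (\<Prod>i<CARD('n). [:-root i, 1:])" by simp
  have pv: "poly (cpoly A) x = (\<Prod>i<CARD('n). x - root i)" for x
    by (subst pe) (simp add: poly_prod)
  have rt: "e \<le> cmod (l - root i)" if "i < CARD('n)" for i
  proof -
    have "poly (cpoly A) (root i) = 0" unfolding pv using that by (auto intro: prod_zero)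
    then have "e \<le> dist (root i) l" by (rule roots)
    then show ?thesis by (simp add: dist_norm norm_minus_commute)
  qed
  have "e ^ CARD('n) = (\<Prod>i<CARD('n). e)" by simp
  also have "\<dots> \<le> (\<Prod>i<CARD('n). cmod (l - root i))"
    by (rule prod_mono) (use rt e0 in auto)
  also have "\<dots> = cmod (poly (cpoly A) l)" unfolding pv prod_norm ..
  finally show ?thesis .
qed

lemma eig_bound:
  assumes "is_eigenvalue N z"
  shows "cmod z \<le> (\<Sum>i\<in>UNIV. \<Sum>j\<in>UNIV. \<bar>N$i$j\<bar>)"
proof -
  obtain v where v0: "v \<noteq> 0" and vv: "cmat N *v v = z *s v"
    using assms unfolding is_eigenvalue_def by blast
  define m where "m = Max (range (\<lambda>j. cmod (v$j)))"
  have "m \<in> range (\<lambda>j. cmod (v$j))" unfolding m_def by (rule Max_in) auto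
  then obtain i where mi: "m = cmod (v$i)" by auto
  have mj: "cmod (v$j) \<le> m" for j unfolding m_def by (rule Max_ge) auto
  have mpos: "0 < m"
  proof (rule ccontr)
    assume "\<not> 0 < m"
    then have "\<forall>j. v$j = 0" using mj by (metis norm_le_zero_iff order_trans not_le)
    then show False using v0 by (simp add: vec_eq_iff)
  qed
  have comp: "(\<Sum>k\<in>UNIV. complex_of_real (N$i$k) * v$k) = z * v$i"
    using vv unfolding vec_eq_iff matrix_vector_mult_def cmat_def by simp
  have "cmod z * m = cmod (\<Sum>k\<in>UNIV. complex_of_real (N$i$k) * v$k)"
    using comp mi by (simp add: norm_mult)
  also have "\<dots> \<le> (\<Sum>k\<in>UNIV. cmod (complex_of_real (N$i$k) * v$k))" by (rule norm_sum)
  also have "\<dots> \<le> (\<Sum>k\<in>UNIV. \<bar>N$i$k\<bar> * m)"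
    by (rule sum_mono) (simp add: norm_mult mult_left_mono mj)
  also have "\<dots> = (\<Sum>k\<in>UNIV. \<bar>N$i$k\<bar>) * m" by (simp add: sum_distrib_right)
  finally have "cmod z \<le> (\<Sum>k\<in>UNIV. \<bar>N$i$k\<bar>)" using mpos by simp
  also have "\<dots> \<le> (\<Sum>i\<in>UNIV. \<Sum>j\<in>UNIV. \<bar>N$i$j\<bar>)"
    by (rule member_le_sum) (auto intro: sum_nonneg)
  finally show ?thesis .
qed

lemma tendsto_if_const:
  "(f \<longlongrightarrow> a) F \<Longrightarrow> ((\<lambda>k. if c then f k else 0) \<longlongrightarrow> (if c then a else 0)) F"
  by (cases c) auto

lemma det_chm_tendsto:
  fixes Ns :: "'b \<Rightarrow> real^('n::finite)^('n::finite)"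
  assumes "(Ns \<longlongrightarrow> N) F" "(zs \<longlongrightarrow> z) F"
  shows "((\<lambda>k. det (chm (cmat (Ns k)) (zs k))) \<longlongrightarrow> det (chm (cmat N) z)) F"
  unfolding det_def chm_def cmat_def
  by (simp, intro tendsto_intros tendsto_if_const assms)


lemma closed_eigF:
  fixes F :: "complex set" assumes cF: "closed F"
  shows "closed {N::real^('n::finite)^('n::finite). \<exists>z\<in>F. is_eigenvalue N z}"
  unfolding closed_sequential_limits
proof (intro allI impI, elim conjE)
  fix Ns :: "nat \<Rightarrow> real^'n^'n" and N
  assume H: "\<forall>n. Ns n \<in> {N. \<exists>z\<in>F. is_eigenvalue N z}" and lim: "Ns \<longlonglongrightarrow> N"
  obtain zs where zs: "\<And>n. zs n \<in> F \<and> is_eigenvalue (Ns n) (zs n)" using H by simp metis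
  define B where "B N = (\<Sum>i\<in>UNIV. \<Sum>j\<in>UNIV. \<bar>(N::real^'n^'n)$i$j\<bar>)" for N
  have "(\<lambda>n. B (Ns n)) \<longlonglongrightarrow> B N" unfolding B_def by (intro tendsto_intros lim)
  then have "Bseq (\<lambda>n. B (Ns n))" by (intro convergent_imp_Bseq convergentI)
  then obtain K where K: "\<forall>n. norm (B (Ns n)) \<le> K" by (rule BseqE)
  have zsb: "\<forall>n. zs n \<in> cball 0 K"
  proof
    fix n
    have "cmod (zs n) \<le> B (Ns n)" unfolding B_def using zs eig_bound by blast
    also have "\<dots> \<le> K" using K[rule_format, of n] by simp
    finally show "zs n \<in> cball 0 K" by simp
  qed
  obtain l r where "l \<in> cball 0 K" and r: "strict_mono r" and lz: "(zs \<circ> r) \<longlonglongrightarrow> l"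
    using seq_compactE[OF compact_imp_seq_compact[OF compact_cball] zsb] by blast
  have lF: "l \<in> F" by (rule closed_sequentially[OF cF _ lz]) (simp add: zs)
  have "(\<lambda>k. det (chm (cmat ((Ns \<circ> r) k)) ((zs \<circ> r) k))) \<longlonglongrightarrow> det (chm (cmat N) l)"
    by (rule det_chm_tendsto[OF LIMSEQ_subseq_LIMSEQ[OF lim r] lz])
  moreover have "(\<lambda>k. det (chm (cmat ((Ns \<circ> r) k)) ((zs \<circ> r) k))) = (\<lambda>k. 0)"
    using zs eig_det by (auto simp: fun_eq_iff)
  ultimately have "det (chm (cmat N) l) = 0" using LIMSEQ_unique tendsto_const by metis
  then show "N \<in> {N. \<exists>z\<in>F. is_eigenvalue N z}" using lF eig_det by blast
qed

lemma closed_noeigU: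
  fixes U :: "complex set" assumes oU: "open U"
  shows "closed {N::real^('n::finite)^('n::finite). \<forall>z\<in>U. \<not> is_eigenvalue N z}"
  unfolding closed_sequential_limits
proof (intro allI impI, elim conjE)
  fix Ns :: "nat \<Rightarrow> real^'n^'n" and N
  assume H: "\<forall>n. Ns n \<in> {N. \<forall>z\<in>U. \<not> is_eigenvalue N z}" and lim: "Ns \<longlonglongrightarrow> N"
  show "N \<in> {N. \<forall>z\<in>U. \<not> is_eigenvalue N z}"
  proof (safe)
    fix l assume lU: "l \<in> U" and ev: "is_eigenvalue N l"
    obtain e where e0: "e > 0" and eb: "ball l e \<subseteq> U" using openE[OF oU lU] by blast
    have low: "e ^ CARD('n) \<le> cmod (det (chm (cmat (Ns n)) l))" for n
    proof -
      have "e ^ CARD('n) \<le> cmod (poly (cpoly (cmat (Ns n))) l)"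
      proof (rule cpoly_lower)
        fix z assume "poly (cpoly (cmat (Ns n))) z = 0"
        then have "is_eigenvalue (Ns n) z" by (simp add: poly_cpoly eig_det)
        then have "z \<notin> U" using H by auto
        then have "z \<notin> ball l e" using eb by auto
        then show "e \<le> dist z l" by (simp add: dist_commute)
      qed (use e0 in simp)
      then show ?thesis by (simp add: poly_cpoly)
    qed
    have "(\<lambda>n. cmod (det (chm (cmat (Ns n)) l))) \<longlonglongrightarrow> cmod (det (chm (cmat N) l))"
      by (intro tendsto_intros det_chm_tendsto lim)
    moreover have "det (chm (cmat N) l) = 0" using ev eig_det by blast
    ultimately have "e ^ CARD('n) \<le> 0" using low by (intro LIMSEQ_le_const) auto
    then show False using zero_less_power[OF e0, of "CARD('n)"] by linarith
  qed
qed

lemma clopen_arg: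
  fixes S :: "(real^('n::finite)^('n::finite)) set"
  assumes cS: "connected S" and cF: "closed F" and oU: "open U"
    and compat: "\<And>M z. M \<in> S \<Longrightarrow> is_eigenvalue M z \<Longrightarrow> (z \<in> F \<longleftrightarrow> z \<in> U)"
    and M0: "M0 \<in> S" "\<forall>z\<in>F. \<not> is_eigenvalue M0 z" and M: "M \<in> S"
  shows "\<forall>z\<in>F. \<not> is_eigenvalue M z"
proof -
  define P where "P = {M\<in>S. \<forall>z\<in>F. \<not> is_eigenvalue M z}"
  have "P = S \<inter> - {N. \<exists>z\<in>F. is_eigenvalue N z}" unfolding P_def by auto
  then have op: "openin (top_of_set S) P"
    using openin_open_Int closed_eigF[OF cF] by (metis open_Compl)
  have "P = S \<inter> {N. \<forall>z\<in>U. \<not> is_eigenvalue N z}" unfolding P_def using compat by blast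
  then have cl: "closedin (top_of_set S) P"
    using closedin_closed_Int closed_noeigU[OF oU] by metis
  have "P = {} \<or> P = S" using cS op cl unfolding connected_clopen by blast
  moreover have "M0 \<in> P" using M0 unfolding P_def by blast
  ultimately have "P = S" by blast
  then show ?thesis using M unfolding P_def by blast
qed

theorem lemma2p6:
  fixes S :: "(real^('n::{finite,linorder})^('n::{finite,linorder})) set"
  assumes "CARD('n) \<ge> 2"
    and "path_connected S"
    and "\<And>M. M \<in> S \<Longrightarrow> invertible M \<and> compound2_nonsingular M"
  shows "((\<exists>M\<in>S. positive_stable M) \<longrightarrow> (\<forall>M\<in>S. positive_stable M))
       \<and> ((\<exists>M\<in>S. hurwitz M) \<longrightarrow> (\<forall>M\<in>S. hurwitz M))"
proof -
  have cS: "connected S" using assms(2) by (rule path_connected_imp_connected)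
  have nz: "Re z \<noteq> 0" if "M \<in> S" "is_eigenvalue M z" for M z
    using no_imag_eig assms(3)[OF that(1)] that(2) by blast
  have ps: "positive_stable M \<longleftrightarrow> (\<forall>z\<in>{z. Re z \<le> 0}. \<not> is_eigenvalue M z)" for M
    unfolding positive_stable_def by (auto simp: not_le)
  have hw: "hurwitz M \<longleftrightarrow> (\<forall>z\<in>{z. Re z \<ge> 0}. \<not> is_eigenvalue M z)" for M
    unfolding hurwitz_def by (auto simp: not_le)
  have c1: "closed {z::complex. Re z \<le> 0}" by (intro closed_Collect_le continuous_intros)
  have c2: "closed {z::complex. Re z \<ge> 0}" by (intro closed_Collect_le continuous_intros)
  have o1: "open {z::complex. Re z < 0}" by (intro open_Collect_less continuous_intros)
  have o2: "open {z::complex. Re z > 0}" by (intro open_Collect_less continuous_intros)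
  have compat1: "z \<in> {z. Re z \<le> 0} \<longleftrightarrow> z \<in> {z. Re z < 0}" if "M \<in> S" "is_eigenvalue M z" for M z
    using nz[OF that] by auto
  have compat2: "z \<in> {z. Re z \<ge> 0} \<longleftrightarrow> z \<in> {z. Re z > 0}" if "M \<in> S" "is_eigenvalue M z" for M z
    using nz[OF that] by auto
  show ?thesis
  proof (intro conjI impI ballI)
    fix M assume "\<exists>M\<in>S. positive_stable M" and MS: "M \<in> S"
    then obtain M0 where M0: "M0 \<in> S" "positive_stable M0" by blast
    show "positive_stable M" unfolding ps
    proof (rule clopen_arg[OF cS c1 o1 _ M0(1) _ MS])
      show "\<forall>z\<in>{z. Re z \<le> 0}. \<not> is_eigenvalue M0 z" using M0(2) ps by blast
    qed (rule compat1)
  next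
    fix M assume "\<exists>M\<in>S. hurwitz M" and MS: "M \<in> S"
    then obtain M0 where M0: "M0 \<in> S" "hurwitz M0" by blast
    show "hurwitz M" unfolding hw
    proof (rule clopen_arg[OF cS c2 o2 _ M0(1) _ MS])
      show "\<forall>z\<in>{z. Re z \<ge> 0}. \<not> is_eigenvalue M0 z" using M0(2) hw by blast
    qed (rule compat2)
  qed
qed

end
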